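(* Let $A\in\mathbb{R}^{n\times n}$, $B\in\mathbb{R}^{n\times m}$, let $N\geq n+m$, and for $i=1,\dots,N$ let $x_{i,1},x_{i,2}\in\mathbb{R}^{n}$, $u_{i,1}\in\mathbb{R}^{m}$ satisfy $x_{i,2}=Ax_{i,1}+Bu_{i,1}$. Put $X_{N,1}:=(x_{1,1},\dots,x_{N,1})^{\top}$, $X_{N,2}:=(x_{1,2},\dots,x_{N,2})^{\top}$ (both in $\mathbb{R}^{N\times n}$), $U_{N,1}:=(u_{1,1},\dots,u_{N,1})^{\top}\in\mathbb{R}^{N\times m}$, and $Z_{N,2}:=X_{N,1}A$. Suppose that $\operatorname{rank}\begin{pmatrix}X_{N,1} & U_{N,1}\end{pmatrix}=n+m$, $\operatorname{rank}X_{N,1}=n$, and $\operatorname{rank}U_{N,1}=m$. Then: (i) the equation $X_{N,1}U_{B_{N,1}}^{\top}=X_{N,1}X_{N,2}^{\top}-Z_{N,2}X_{N,1}^{\top}$ in the unknown $U_{B_{N,1}}\in\mathbb{R}^{N\times n}$ has the unique solution $U_{B_{N,1}}=U_{N,1}B^{\top}$; (ii) for every $S\in\mathbb{R}^{n\times r}$, with $U_{B_{N,1}}=U_{N,1}B^{\top}$, the equation $U_{N,1}S_{B}=U_{B_{N,1}}S$ in the unknown $S_{B}\in\mathbb{R}^{m\times r}$ has the unique solution $S_{B}=B^{\top}S$. *)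

theory Defs
  imports "HOL-Analysis.Analysis"
begin

definition hblock :: "real^'n^'N \<Rightarrow> real^'m^'N \<Rightarrow> real^('n + 'm)^'N" where
  "hblock X U = (\<chi> i j. case j of Inl a \<Rightarrow> X $ i $ a | Inr b \<Rightarrow> U $ i $ b)"

end

theory Submission
  imports Defs
begin

lemma left_cancel_full_rank:
  fixes X :: "real^'n^'N"
  assumes "rank X = CARD('n)" and "X ** P = X ** Q"
  shows "P = Q"
proof -
  from assms(1) have "inj ((*v) X)" by (simp add: full_rank_injective)
  then obtain L where L: "L ** X = mat 1" using matrix_left_invertible_injective by blast
  have "L ** (X ** P) = L ** (X ** Q)" using assms(2) by simp
  then show ?thesis by (simp add: matrix_mul_assoc L)
qed

theorem lemma3:
  fixes A :: "real^'n^'n" and B :: "real^'m^'n"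
    and x1 x2 :: "'N::finite \<Rightarrow> real^'n" and u1 :: "'N \<Rightarrow> real^'m"
    and X1 X2 Z2 :: "real^'n^'N" and U1 :: "real^'m^'N"
  assumes N_ge: "CARD('N) \<ge> CARD('n) + CARD('m)"
    and dyn: "\<And>i. x2 i = A *v x1 i + B *v u1 i"
    and X1_def: "X1 = (\<chi> i. x1 i)"
    and X2_def: "X2 = (\<chi> i. x2 i)"
    and U1_def: "U1 = (\<chi> i. u1 i)"
    and Z2_def: "Z2 = X1 ** A"
    and rk_XU: "rank (hblock X1 U1) = CARD('n) + CARD('m)"
    and rk_X: "rank X1 = CARD('n)"
    and rk_U: "rank U1 = CARD('m)"
  shows "(\<forall>UB :: real^'n^'N.
            X1 ** transpose UB = X1 ** transpose X2 - Z2 ** transpose X1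
            \<longleftrightarrow> UB = U1 ** transpose B)
       \<and> (\<forall>(S :: real^'r^'n) (SB :: real^'r^'m).
            U1 ** SB = (U1 ** transpose B) ** S \<longleftrightarrow> SB = transpose B ** S)"
proof -
  have X2eq: "X2 = X1 ** transpose A + U1 ** transpose B"
    by (simp add: vec_eq_iff X1_def X2_def U1_def dyn matrix_matrix_mult_def
        matrix_vector_mult_def transpose_def mult.commute)
  have tX2: "transpose X2 = A ** transpose X1 + B ** transpose U1"
    by (simp add: X2eq vec_eq_iff transpose_def matrix_matrix_mult_def mult.commute)
  have key: "X1 ** transpose X2 - Z2 ** transpose X1 = X1 ** transpose (U1 ** transpose B)"
    by (simp add: tX2 Z2_def matrix_add_ldistrib matrix_mul_assoc matrix_transpose_mul)
  show ?thesis
  proof (intro conjI allI iffI)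
    fix UB :: "real^'n^'N"
    assume "X1 ** transpose UB = X1 ** transpose X2 - Z2 ** transpose X1"
    then have "transpose UB = transpose (U1 ** transpose B)"
      using left_cancel_full_rank[OF rk_X] key by metis
    then show "UB = U1 ** transpose B" by (metis transpose_transpose)
  next
    fix UB :: "real^'n^'N"
    assume "UB = U1 ** transpose B"
    then show "X1 ** transpose UB = X1 ** transpose X2 - Z2 ** transpose X1" using key by simp
  next
    fix S :: "real^'r^'n" and SB :: "real^'r^'m"
    assume "U1 ** SB = (U1 ** transpose B) ** S"
    then show "SB = transpose B ** S"
      using left_cancel_full_rank[OF rk_U] by (metis matrix_mul_assoc)
  next
    fix S :: "real^'r^'n" and SB :: "real^'r^'m"
    assume "SB = transpose B ** S"
    then show "U1 ** SB = (U1 ** transpose B) ** S" by (simp add: matrix_mul_assoc)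
  qed
qed

end
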